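(* Let $M$ be a multigraph with $n$ vertices. Then $M$ is the double competition multigraph of some digraph (loops allowed) if and only if there exist an ordering $(v_1,\ldots,v_n)$ of the vertices of $M$ and a double indexed edge clique partition $\{S_{ij} \mid i,j\in[n]\}$ of $M$ such that the following condition holds: (I) for any $i,j\in[n]$, if $|A_i\cap B_j|\ge 2$, then $A_i\cap B_j = S_{ij}$, where $A_i = S_{i*}\cup T^+_i$, $S_{i*} := \bigcup_{p\in[n]} S_{ip}$, $T^+_i := \{v_b \mid a,b\in[n],\ v_i\in S_{ab}\}$, and $B_j = S_{*j}\cup T^-_j$, $S_{*j} := \bigcup_{q\in[n]} S_{qj}$, $T^-_j := \{v_a \mid a,b\in[n],\ v_j\in S_{ab}\}$.
   Context: A digraph $D$ is a pair $(V(D),A(D))$ with $A(D)$ a set of ordered pairs of vertices (arcs); an arc $(v,v)$ is a loop. $N^+_D(x)=\{v\mid (x,v)\in A(D)\}$ and $N^-_D(x)=\{v\mid (v,x)\in A(D)\}$. A multigraph $M$ (without loops) is a vertex set $V(M)$ together with a function $m_M$ assigning to each unordered pair $\{x,y\}$ of distinct vertices a nonnegative integer, the number of edges between $x$ and $y$. The double competition multigraph of a digraph $D$ is the multigraph $M$ with $V(M)=V(D)$ and $m_M(\{x,y\}) = |N^+_D(x)\cap N^+_D(y)|\cdot|N^-_D(x)\cap N^-_D(y)|$ for distinct $x,y$. A clique of $M$ is a set of vertices that are pairwise adjacent (i.e. $m_M\ge 1$ on every pair of distinct elements); the empty set and singletons count as cliques. An edge clique partition of $M$ is a family (multiset) $\mathcal{F}$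 of cliques of $M$ such that any two distinct vertices $x,y$ are contained in exactly $m_M(\{x,y\})$ members of $\mathcal{F}$; a double indexed edge clique partition $\{S_{ij}\mid i,j\in[n]\}$ is such a family indexed by pairs $(i,j)\in[n]\times[n]$ (members may be empty). $[n]=\{1,\ldots,n\}$. *)

theory Defs
  imports Main
begin

text \<open>A multigraph on vertex set V is given by a multiplicity function m on unordered
pairs; only the values m {x,y} for distinct x, y in V are relevant.\<close>

definition out_nbr :: "('a \<times> 'a) set \<Rightarrow> 'a \<Rightarrow> 'a set" where
  "out_nbr Arcs x = {v. (x, v) \<in> Arcs}"

definition in_nbr :: "('a \<times> 'a) set \<Rightarrow> 'a \<Rightarrow> 'a set" where
  "in_nbr Arcs x = {v. (v, x) \<in> Arcs}"

definition is_dcm :: "'a set \<Rightarrow> ('a set \<Rightarrow> nat) \<Rightarrow> ('a \<times> 'a) set \<Rightarrow> bool" where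
  "is_dcm V m Arcs \<longleftrightarrow> Arcs \<subseteq> V \<times> V \<and>
     (\<forall>x\<in>V. \<forall>y\<in>V. x \<noteq> y \<longrightarrow>
        m {x, y} = card (out_nbr Arcs x \<inter> out_nbr Arcs y) * card (in_nbr Arcs x \<inter> in_nbr Arcs y))"

definition is_clique :: "'a set \<Rightarrow> ('a set \<Rightarrow> nat) \<Rightarrow> 'a set \<Rightarrow> bool" where
  "is_clique V m C \<longleftrightarrow> C \<subseteq> V \<and> (\<forall>x\<in>C. \<forall>y\<in>C. x \<noteq> y \<longrightarrow> m {x, y} \<ge> 1)"

definition double_indexed_ecp :: "'a set \<Rightarrow> ('a set \<Rightarrow> nat) \<Rightarrow> nat \<Rightarrow> (nat \<Rightarrow> nat \<Rightarrow> 'a set) \<Rightarrow> bool" where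
  "double_indexed_ecp V m n S \<longleftrightarrow>
     (\<forall>i\<in>{1..n}. \<forall>j\<in>{1..n}. is_clique V m (S i j)) \<and>
     (\<forall>x\<in>V. \<forall>y\<in>V. x \<noteq> y \<longrightarrow>
        card {(i, j). i \<in> {1..n} \<and> j \<in> {1..n} \<and> x \<in> S i j \<and> y \<in> S i j} = m {x, y})"

definition T_plus :: "nat \<Rightarrow> (nat \<Rightarrow> 'a) \<Rightarrow> (nat \<Rightarrow> nat \<Rightarrow> 'a set) \<Rightarrow> nat \<Rightarrow> 'a set" where
  "T_plus n v S i = {v b | a b. a \<in> {1..n} \<and> b \<in> {1..n} \<and> v i \<in> S a b}"

definition T_minus :: "nat \<Rightarrow> (nat \<Rightarrow> 'a) \<Rightarrow> (nat \<Rightarrow> nat \<Rightarrow> 'a set) \<Rightarrow> nat \<Rightarrow> 'a set" where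
  "T_minus n v S j = {v a | a b. a \<in> {1..n} \<and> b \<in> {1..n} \<and> v j \<in> S a b}"

definition A_set :: "nat \<Rightarrow> (nat \<Rightarrow> 'a) \<Rightarrow> (nat \<Rightarrow> nat \<Rightarrow> 'a set) \<Rightarrow> nat \<Rightarrow> 'a set" where
  "A_set n v S i = (\<Union>p\<in>{1..n}. S i p) \<union> T_plus n v S i"

definition B_set :: "nat \<Rightarrow> (nat \<Rightarrow> 'a) \<Rightarrow> (nat \<Rightarrow> nat \<Rightarrow> 'a set) \<Rightarrow> nat \<Rightarrow> 'a set" where
  "B_set n v S j = (\<Union>q\<in>{1..n}. S q j) \<union> T_minus n v S j"

definition condition_I :: "nat \<Rightarrow> (nat \<Rightarrow> 'a) \<Rightarrow> (nat \<Rightarrow> nat \<Rightarrow> 'a set) \<Rightarrow> bool" where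
  "condition_I n v S \<longleftrightarrow>
     (\<forall>i\<in>{1..n}. \<forall>j\<in>{1..n}. card (A_set n v S i \<inter> B_set n v S j) \<ge> 2 \<longrightarrow>
        A_set n v S i \<inter> B_set n v S j = S i j)"

end

theory Submission
  imports Defs
begin

lemma card_pre:
  assumes "bij_betw v I V" "X \<subseteq> V"
  shows "card {i\<in>I. v i \<in> X} = card X"
proof -
  have "v ` {i\<in>I. v i \<in> X} = X" using assms bij_betw_imp_surj_on by fastforce
  then have "bij_betw v {i\<in>I. v i \<in> X} X"
    using bij_betw_subset[OF assms(1)] by auto
  then show ?thesis by (rule bij_betw_same_card)
qed

lemma forward:
  assumes fin: "finite V" and cV: "card V = n" and D: "is_dcm V m Arcs"
  shows "\<exists>v S. bij_betw v {1..n} V \<and> double_indexed_ecp V m n S \<and> condition_I n v S"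
proof -
  obtain v where bij: "bij_betw v {1..n} V"
    using ex_bij_betw_nat_finite_1[OF fin] cV by auto
  have AV: "Arcs \<subseteq> V \<times> V" and mm: "\<And>x y. x\<in>V \<Longrightarrow> y\<in>V \<Longrightarrow> x\<noteq>y \<Longrightarrow>
     m {x, y} = card (out_nbr Arcs x \<inter> out_nbr Arcs y) * card (in_nbr Arcs x \<inter> in_nbr Arcs y)"
    using D unfolding is_dcm_def by auto
  have vV: "\<And>i. i \<in> {1..n} \<Longrightarrow> v i \<in> V" using bij bij_betwE by blast
  define S where "S i j = {x. (x, v i) \<in> Arcs \<and> (v j, x) \<in> Arcs}" for i j
  have AB: "A_set n v S i \<inter> B_set n v S j = S i j" if "i\<in>{1..n}" "j\<in>{1..n}" for i j
  proof
    show "A_set n v S i \<inter> B_set n v S j \<subseteq> S i j"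
      unfolding A_set_def B_set_def T_plus_def T_minus_def S_def by auto
    show "S i j \<subseteq> A_set n v S i \<inter> B_set n v S j"
      unfolding A_set_def B_set_def using that by blast
  qed
  have outV: "out_nbr Arcs x \<subseteq> V" for x using AV unfolding out_nbr_def by auto
  have inV: "in_nbr Arcs x \<subseteq> V" for x using AV unfolding in_nbr_def by auto
  have SV: "S i j \<subseteq> V" for i j using AV unfolding S_def by auto
  have clq: "is_clique V m (S i j)" if "i\<in>{1..n}" "j\<in>{1..n}" for i j
    unfolding is_clique_def
  proof (intro conjI ballI impI)
    show "S i j \<subseteq> V" by (rule SV)
    fix x y assume xy: "x \<in> S i j" "y \<in> S i j" "x \<noteq> y"
    have "v i \<in> out_nbr Arcs x \<inter> out_nbr Arcs y" using xy unfolding S_def out_nbr_def by auto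
    then have c1: "card (out_nbr Arcs x \<inter> out_nbr Arcs y) \<ge> 1"
      using outV fin by (metis One_nat_def Suc_leI card_gt_0_iff empty_iff finite_Int finite_subset)
    have "v j \<in> in_nbr Arcs x \<inter> in_nbr Arcs y" using xy unfolding S_def in_nbr_def by auto
    then have c2: "card (in_nbr Arcs x \<inter> in_nbr Arcs y) \<ge> 1"
      using inV fin by (metis One_nat_def Suc_leI card_gt_0_iff empty_iff finite_Int finite_subset)
    have "m {x,y} = card (out_nbr Arcs x \<inter> out_nbr Arcs y) * card (in_nbr Arcs x \<inter> in_nbr Arcs y)"
      using mm xy SV by blast
    then show "1 \<le> m {x, y}" using c1 c2 by (simp add: Suc_le_eq)
  qed
  have cnt: "card {(i, j). i \<in> {1..n} \<and> j \<in> {1..n} \<and> x \<in> S i j \<and> y \<in> S i j} = m {x, y}"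
    if "x\<in>V" "y\<in>V" "x\<noteq>y" for x y
  proof -
    have "{(i, j). i \<in> {1..n} \<and> j \<in> {1..n} \<and> x \<in> S i j \<and> y \<in> S i j} =
      {i\<in>{1..n}. v i \<in> out_nbr Arcs x \<inter> out_nbr Arcs y} \<times> {j\<in>{1..n}. v j \<in> in_nbr Arcs x \<inter> in_nbr Arcs y}"
      unfolding S_def out_nbr_def in_nbr_def by auto
    moreover have "card {i\<in>{1..n}. v i \<in> out_nbr Arcs x \<inter> out_nbr Arcs y} = card (out_nbr Arcs x \<inter> out_nbr Arcs y)"
      using card_pre[OF bij] outV by (meson le_infI1)
    moreover have "card {i\<in>{1..n}. v i \<in> in_nbr Arcs x \<inter> in_nbr Arcs y} = card (in_nbr Arcs x \<inter> in_nbr Arcs y)"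
      using card_pre[OF bij] inV by (meson le_infI1)
    ultimately have "card {(i, j). i \<in> {1..n} \<and> j \<in> {1..n} \<and> x \<in> S i j \<and> y \<in> S i j} =
      card (out_nbr Arcs x \<inter> out_nbr Arcs y) * card (in_nbr Arcs x \<inter> in_nbr Arcs y)"
      by (simp only: card_cartesian_product)
    then show ?thesis using mm that by simp
  qed
  have "double_indexed_ecp V m n S" unfolding double_indexed_ecp_def using clq cnt by blast
  moreover have "condition_I n v S" unfolding condition_I_def using AB by blast
  ultimately show ?thesis using bij by blast
qed

lemma backward:
  assumes fin: "finite V" and bij: "bij_betw v {1..n} V" and E: "double_indexed_ecp V m n S"
    and CI: "condition_I n v S"
  shows "\<exists>Arcs. is_dcm V m Arcs"
proof -
  have vV: "\<And>i. i \<in> {1..n} \<Longrightarrow> v i \<in> V" using bij bij_betwE by blast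
  have inj: "inj_on v {1..n}" using bij_betw_imp_inj_on[OF bij] .
  have surj: "V = v ` {1..n}" using bij_betw_imp_surj_on[OF bij] by simp
  have SV: "S i j \<subseteq> V" if "i\<in>{1..n}" "j\<in>{1..n}" for i j
    using E that unfolding double_indexed_ecp_def is_clique_def by simp
  have cnt: "\<And>x y. x\<in>V \<Longrightarrow> y\<in>V \<Longrightarrow> x\<noteq>y \<Longrightarrow>
        card {(i, j). i \<in> {1..n} \<and> j \<in> {1..n} \<and> x \<in> S i j \<and> y \<in> S i j} = m {x, y}"
    using E unfolding double_indexed_ecp_def by simp
  define A where "A i = A_set n v S i" for i
  define B where "B j = B_set n v S j" for j
  have AV: "A i \<subseteq> V" if "i\<in>{1..n}" for i
    unfolding A_def A_set_def T_plus_def using SV that vV by blast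
  have BV: "B j \<subseteq> V" if "j\<in>{1..n}" for j
    unfolding B_def B_set_def T_minus_def using SV that vV by blast
  have sym: "v i \<in> B j \<longleftrightarrow> v j \<in> A i" if ij: "i\<in>{1..n}" "j\<in>{1..n}" for i j
  proof
    assume "v i \<in> B j"
    then consider q where "q\<in>{1..n}" "v i \<in> S q j" | a b where "a\<in>{1..n}" "b\<in>{1..n}" "v i = v a" "v j \<in> S a b"
      unfolding B_def B_set_def T_minus_def by blast
    then show "v j \<in> A i"
    proof cases
      case 1 then show ?thesis unfolding A_def A_set_def T_plus_def using ij by blast
    next
      case 2 then have "a = i" using inj ij inj_onD by metis
      then show ?thesis using 2 unfolding A_def A_set_def by blast
    qed
  next
    assume "v j \<in> A i"
    then consider p where "p\<in>{1..n}" "v j \<in> S i p" | a b where "a\<in>{1..n}" "b\<in>{1..n}" "v j = v b" "v i \<in> S a b"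
      unfolding A_def A_set_def T_plus_def by blast
    then show "v i \<in> B j"
    proof cases
      case 1 then show ?thesis unfolding B_def B_set_def T_minus_def using ij by blast
    next
      case 2 then have "b = j" using inj ij inj_onD by metis
      then show ?thesis using 2 unfolding B_def B_set_def by blast
    qed
  qed
  define Arcs where "Arcs = {(x, v i) | x i. i \<in> {1..n} \<and> x \<in> A i}"
  have sub: "Arcs \<subseteq> V \<times> V" unfolding Arcs_def using AV vV by blast
  have outn: "out_nbr Arcs x = v ` {i\<in>{1..n}. x \<in> A i}" for x
    unfolding out_nbr_def Arcs_def by auto
  have inn: "in_nbr Arcs x = v ` {j\<in>{1..n}. x \<in> B j}" if xV: "x \<in> V" for x
  proof -
    obtain k where k: "k\<in>{1..n}" "x = v k" using surj xV by blast
    have "in_nbr Arcs x = A k"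
    proof -
      have "in_nbr Arcs x = {y. \<exists>i\<in>{1..n}. v k = v i \<and> y \<in> A i}"
        unfolding in_nbr_def Arcs_def k by auto
      also have "\<dots> = A k"
      proof -
        have "\<forall>i\<in>{1..n}. v k = v i \<longrightarrow> i = k" using inj k(1) by (metis inj_onD)
        then show ?thesis using k(1) by blast
      qed
      finally show ?thesis .
    qed
    also have "\<dots> = v ` {j\<in>{1..n}. x \<in> B j}"
    proof
      show "A k \<subseteq> v ` {j\<in>{1..n}. x \<in> B j}"
      proof
        fix y assume y: "y \<in> A k"
        then obtain j where j: "j\<in>{1..n}" "y = v j" using AV[OF k(1)] surj by blast
        then have "x \<in> B j" using sym[OF k(1) j(1)] y k by simp
        then show "y \<in> v ` {j\<in>{1..n}. x \<in> B j}" using j by blast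
      qed
      show "v ` {j\<in>{1..n}. x \<in> B j} \<subseteq> A k" using sym k by auto
    qed
    finally show ?thesis .
  qed
  have cardim: "card (v ` {i\<in>{1..n}. P i}) = card {i\<in>{1..n}. P i}" for P
    using inj by (intro card_image) (auto intro: inj_on_subset)
  have "m {x, y} = card (out_nbr Arcs x \<inter> out_nbr Arcs y) * card (in_nbr Arcs x \<inter> in_nbr Arcs y)"
    if xy: "x\<in>V" "y\<in>V" "x\<noteq>y" for x y
  proof -
    have o: "out_nbr Arcs x \<inter> out_nbr Arcs y = v ` {i\<in>{1..n}. x \<in> A i \<and> y \<in> A i}"
    proof -
      have "out_nbr Arcs x \<inter> out_nbr Arcs y = v ` ({i\<in>{1..n}. x \<in> A i} \<inter> {i\<in>{1..n}. y \<in> A i})"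
        unfolding outn by (rule inj_on_image_Int[OF inj, symmetric]) auto
      also have "{i\<in>{1..n}. x \<in> A i} \<inter> {i\<in>{1..n}. y \<in> A i} = {i\<in>{1..n}. x \<in> A i \<and> y \<in> A i}" by blast
      finally show ?thesis .
    qed
    have i: "in_nbr Arcs x \<inter> in_nbr Arcs y = v ` {i\<in>{1..n}. x \<in> B i \<and> y \<in> B i}"
    proof -
      have "in_nbr Arcs x \<inter> in_nbr Arcs y = v ` ({i\<in>{1..n}. x \<in> B i} \<inter> {i\<in>{1..n}. y \<in> B i})"
        unfolding inn[OF xy(1)] inn[OF xy(2)] by (rule inj_on_image_Int[OF inj, symmetric]) auto
      also have "{i\<in>{1..n}. x \<in> B i} \<inter> {i\<in>{1..n}. y \<in> B i} = {i\<in>{1..n}. x \<in> B i \<and> y \<in> B i}" by blast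
      finally show ?thesis .
    qed
    have eq: "{(i, j). i \<in> {1..n} \<and> j \<in> {1..n} \<and> x \<in> S i j \<and> y \<in> S i j} =
       {i\<in>{1..n}. x \<in> A i \<and> y \<in> A i} \<times> {i\<in>{1..n}. x \<in> B i \<and> y \<in> B i}"
    proof (intro set_eqI iffI)
      fix z assume "z \<in> {(i, j). i \<in> {1..n} \<and> j \<in> {1..n} \<and> x \<in> S i j \<and> y \<in> S i j}"
      then show "z \<in> {i\<in>{1..n}. x \<in> A i \<and> y \<in> A i} \<times> {i\<in>{1..n}. x \<in> B i \<and> y \<in> B i}"
        unfolding A_def B_def A_set_def B_set_def by blast
    next
      fix z assume z: "z \<in> {i\<in>{1..n}. x \<in> A i \<and> y \<in> A i} \<times> {i\<in>{1..n}. x \<in> B i \<and> y \<in> B i}"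
      obtain i j where ij: "z = (i,j)" "i\<in>{1..n}" "j\<in>{1..n}" "x \<in> A i \<inter> B j" "y \<in> A i \<inter> B j"
        using z by auto
      have "{x,y} \<subseteq> A i \<inter> B j" using ij by auto
      moreover have "finite (A i \<inter> B j)" using AV[OF ij(2)] fin finite_subset by blast
      ultimately have "card {x,y} \<le> card (A i \<inter> B j)" by (rule card_mono[rotated])
      then have "card (A i \<inter> B j) \<ge> 2" using xy by simp
      then have "A i \<inter> B j = S i j" using CI ij unfolding condition_I_def A_def B_def by blast
      then show "z \<in> {(i, j). i \<in> {1..n} \<and> j \<in> {1..n} \<and> x \<in> S i j \<and> y \<in> S i j}"
        using ij by auto
    qed
    show ?thesis unfolding o i cardim using cnt[OF xy] eq by (simp add: card_cartesian_product)
  qed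
  then show ?thesis unfolding is_dcm_def using sub by blast
qed

theorem theorem1:
  fixes V :: "'a set" and m :: "'a set \<Rightarrow> nat" and n :: nat
  assumes "finite V" and "card V = n"
  shows "(\<exists>Arcs. is_dcm V m Arcs) \<longleftrightarrow>
         (\<exists>v S. bij_betw v {1..n} V \<and> double_indexed_ecp V m n S \<and> condition_I n v S)"
  using forward[OF assms] backward[OF assms(1)] by blast

end
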